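(* Fix integers $m\ge d\ge1$, $\lambda=d/m$, and $\sigma^2,\tau^2>0$. Then $L_d^{(m-d)}\big(\frac{x}{\sigma^2+\tau^2}\big)$ and $L_d^{(m-d)}\big(\frac{x}{\sigma^2}\big)\boxplus_{d,\lambda}L_d^{(m-d)}\big(\frac{x}{\tau^2}\big)$ have the same roots (they differ only by a nonzero constant factor).
   Context: $L_d^{(\alpha)}(x)=\sum_{i=0}^d\binom{d+\alpha}{d-i}\frac{(-x)^i}{i!}$. For $p=\sum_{i=0}^d(-1)^ia_ix^{d-i}$, $q=\sum_{i=0}^d(-1)^ib_ix^{d-i}$: $(p\boxplus_{d,\lambda}q)(x)=\sum_{k=0}^dx^{d-k}(-1)^k\sum_{i+j=k}\frac{(d-i)!(d-j)!}{d!(d-k)!}\frac{(m-i)!(m-j)!}{m!(m-k)!}a_ib_j$. *)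

theory Defs
  imports "HOL-Computational_Algebra.Polynomial"
begin

definition laguerre :: "nat \<Rightarrow> real \<Rightarrow> real poly" where
  "laguerre d \<alpha> = (\<Sum>i=0..d. monom (((real d + \<alpha>) gchoose (d - i)) * (-1) ^ i / fact i) i)"

text \<open>Coefficient a_i of p written as p = sum_i (-1)^i a_i x^(d-i).\<close>
definition ffc_coeff :: "nat \<Rightarrow> real poly \<Rightarrow> nat \<Rightarrow> real" where
  "ffc_coeff d p i = (-1) ^ i * coeff p (d - i)"

text \<open>Rectangular finite free additive convolution with parameter lambda = d/m
  (encoded by the pair d, m).\<close>
definition rect_conv :: "nat \<Rightarrow> nat \<Rightarrow> real poly \<Rightarrow> real poly \<Rightarrow> real poly" where
  "rect_conv d m p q =
     (\<Sum>k=0..d. monom ((-1) ^ k *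
        (\<Sum>i=0..k. (fact (d - i) * fact (d - (k - i)) / (fact d * fact (d - k))) *
                   (fact (m - i) * fact (m - (k - i)) / (fact m * fact (m - k))) *
                   ffc_coeff d p i * ffc_coeff d q (k - i))) (d - k))"

end

theory Submission imports Defs begin

lemma coeff_pcomp_lin: "coeff (pcompose p [:0, a::real:]) n = coeff p n * a ^ n"
proof (induction p arbitrary: n)
  case (pCons c p)
  show ?case by (cases n) (auto simp add: pcompose_pCons coeff_pCons pCons.IH algebra_simps)
qed simp

lemma coeff_sum_monom:
  "coeff (\<Sum>k=0..d. monom (f k) (d - k)) n = (if n \<le> d then f (d - n) else 0)"
proof -
  have "coeff (\<Sum>k=0..d. monom (f k) (d - k)) n = (\<Sum>k=0..d. if k = d - n \<and> n \<le> d then f k else 0)"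
    by (simp add: coeff_sum coeff_monom) (rule sum.cong, auto)
  also have "\<dots> = (if n \<le> d then f (d - n) else 0)"
    by (cases "n \<le> d") (simp_all add: sum.delta')
  finally show ?thesis .
qed

lemma coeff_lag:
  "coeff (laguerre d a) n = (if n \<le> d then ((real d + a) gchoose (d - n)) * (-1) ^ n / fact n else 0)"
proof -
  have "coeff (laguerre d a) n = (\<Sum>i=0..d. if i = n then ((real d + a) gchoose (d - i)) * (-1) ^ i / fact i else 0)"
    unfolding laguerre_def by (simp add: coeff_sum coeff_monom)
  then show ?thesis by (simp add: sum.delta')
qed



lemma sign_lem: "((-1::real)^i * (-1)^(j+n)) * ((-1)^j * (-1)^(i+n)) = 1"
proof -
  have sq: "\<And>k. ((-1::real)^k)^2 = 1"
    by (metis power_minus1_even power_mult mult.commute)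
  show ?thesis by (simp add: power_add algebra_simps sq)
qed

lemma term_lem:
  fixes s t :: real and i j n e :: nat
  assumes "s > 0" "t > 0"
  shows "(fact (j+n) * fact (i+n) / (fact (i+j+n) * fact n)) *
         (fact (j+n+e) * fact (i+n+e) / (fact (i+j+n+e) * fact (n+e))) *
         ((-1)^i * (real ((i+j+n+e) choose i) * (-1)^(j+n) / fact (j+n) * (1/s)^(j+n))) *
         ((-1)^j * (real ((i+j+n+e) choose j) * (-1)^(i+n) / fact (i+n) * (1/t)^(i+n)))
       = fact (i+j+n+e) / (fact (i+j+n) * fact n * fact (n+e) * fact (i+j) * (s*t)^(i+j+n)) *
         (real ((i+j) choose i) * s^i * t^j)"
proof -
  have c1: "real ((i+j+n+e) choose i) = fact (i+j+n+e) / (fact i * fact (j+n+e))"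
    using binomial_fact[of i "i+j+n+e", where 'a=real] by (simp add: add.assoc)
  have c2: "real ((i+j+n+e) choose j) = fact (i+j+n+e) / (fact j * fact (i+n+e))"
    using binomial_fact[of j "i+j+n+e", where 'a=real] by (simp add: add.commute add.left_commute)
  have c3: "real ((i+j) choose i) = fact (i+j) / (fact i * fact j)"
    using binomial_fact[of i "i+j", where 'a=real] by simp
  have sg: "((-1::real)^i * (-1)^(j+n)) * ((-1)^j * (-1)^(i+n)) = 1" by (rule sign_lem)
  show ?thesis
    unfolding c1 c2 c3
    using assms sg
    by (simp add: field_simps power_add power_mult_distrib)
qed


lemma coeff_L:
  assumes "d \<le> m"
  shows "coeff (laguerre d (real m - real d)) n =
    (if n \<le> d then real (m choose (d - n)) * (-1) ^ n / fact n else 0)"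
  by (simp add: coeff_lag binomial_gbinomial)

lemma ffc_L:
  assumes "d \<le> m" "i \<le> d"
  shows "ffc_coeff d (pcompose (laguerre d (real m - real d)) [:0, 1/s:]) i =
    (-1)^i * (real (m choose i) * (-1)^(d-i) / fact (d-i) * (1/s)^(d-i))"
  using assms by (simp add: ffc_coeff_def coeff_pcomp_lin coeff_L)

lemma inner_sum:
  fixes s t :: real
  assumes "s > 0" "t > 0" "k \<le> d" "d \<le> m"
  shows "(\<Sum>i=0..k. (fact (d - i) * fact (d - (k - i)) / (fact d * fact (d - k))) *
                   (fact (m - i) * fact (m - (k - i)) / (fact m * fact (m - k))) *
                   ffc_coeff d (pcompose (laguerre d (real m - real d)) [:0, 1/s:]) i *
                   ffc_coeff d (pcompose (laguerre d (real m - real d)) [:0, 1/t:]) (k - i))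
     = fact m / (fact d * fact (d-k) * fact (m-k) * fact k * (s*t)^d) * (s+t)^k"
proof -
  obtain n where dn: "d = k + n" using assms(3) le_Suc_ex by blast
  obtain e where me: "m = d + e" using assms(4) le_Suc_ex by blast
  define K where "K = fact m / (fact d * fact (d-k) * fact (m-k) * fact k * (s*t)^d :: real)"
  have "(\<Sum>i=0..k. (fact (d - i) * fact (d - (k - i)) / (fact d * fact (d - k))) *
                   (fact (m - i) * fact (m - (k - i)) / (fact m * fact (m - k))) *
                   ffc_coeff d (pcompose (laguerre d (real m - real d)) [:0, 1/s:]) i *
                   ffc_coeff d (pcompose (laguerre d (real m - real d)) [:0, 1/t:]) (k - i))
     = (\<Sum>i=0..k. K * (real (k choose i) * s^i * t^(k-i)))"
  proof (rule sum.cong)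
    fix i assume "i \<in> {0..k}"
    then have ik: "i \<le> k" by simp
    define j where "j = k - i"
    have kij: "k = i + j" using ik j_def by simp
    have kid: "k - i \<le> d" using assms(3) by simp
    have "(fact (d - i) * fact (d - (k - i)) / (fact d * fact (d - k))) *
                   (fact (m - i) * fact (m - (k - i)) / (fact m * fact (m - k))) *
                   ffc_coeff d (pcompose (laguerre d (real m - real d)) [:0, 1/s:]) i *
                   ffc_coeff d (pcompose (laguerre d (real m - real d)) [:0, 1/t:]) (k - i)
      = (fact (j+n) * fact (i+n) / (fact (i+j+n) * fact n)) *
         (fact (j+n+e) * fact (i+n+e) / (fact (i+j+n+e) * fact (n+e))) *
         ((-1)^i * (real ((i+j+n+e) choose i) * (-1)^(j+n) / fact (j+n) * (1/s)^(j+n))) *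
         ((-1)^j * (real ((i+j+n+e) choose j) * (-1)^(i+n) / fact (i+n) * (1/t)^(i+n)))"
      unfolding ffc_L[OF assms(4) order_trans[OF ik assms(3)]]
        ffc_L[OF assms(4) kid, where s=t]
      unfolding j_def[symmetric]
      by (simp add: dn me kij add_ac)
    also have "\<dots> = fact (i+j+n+e) / (fact (i+j+n) * fact n * fact (n+e) * fact (i+j) * (s*t)^(i+j+n)) *
         (real ((i+j) choose i) * s^i * t^j)"
      by (rule term_lem[OF assms(1,2)])
    also have "\<dots> = K * (real (k choose i) * s^i * t^(k-i))"
      unfolding K_def j_def[symmetric] unfolding me unfolding dn unfolding kij by (simp add: add_ac)
    finally show "(fact (d - i) * fact (d - (k - i)) / (fact d * fact (d - k))) *
                   (fact (m - i) * fact (m - (k - i)) / (fact m * fact (m - k))) *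
                   ffc_coeff d (pcompose (laguerre d (real m - real d)) [:0, 1/s:]) i *
                   ffc_coeff d (pcompose (laguerre d (real m - real d)) [:0, 1/t:]) (k - i)
        = K * (real (k choose i) * s^i * t^(k-i))" .
  qed simp
  also have "\<dots> = K * (s+t)^k"
    by (simp add: binomial_ring[of s t k] sum_distrib_left atLeast0AtMost)
  finally show ?thesis unfolding K_def .
qed

theorem mainTheorem10:
  fixes d m :: nat and s t :: real
  assumes "1 \<le> d" and "d \<le> m" and "0 < s" and "0 < t"
  shows "\<exists>c::real. c \<noteq> 0 \<and>
    rect_conv d m (pcompose (laguerre d (real m - real d)) [:0, 1 / s:])
                  (pcompose (laguerre d (real m - real d)) [:0, 1 / t:])
    = smult c (pcompose (laguerre d (real m - real d)) [:0, 1 / (s + t):])"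
proof -
  define c where "c = (-1)^d * (s+t)^d / ((s*t)^d * fact d :: real)"
  have cnz: "c \<noteq> 0" unfolding c_def using assms by simp
  have sq: "\<And>k. ((-1::real)^k)^2 = 1"
    by (metis power_minus1_even power_mult mult.commute)
  have "rect_conv d m (pcompose (laguerre d (real m - real d)) [:0, 1 / s:])
                  (pcompose (laguerre d (real m - real d)) [:0, 1 / t:])
    = smult c (pcompose (laguerre d (real m - real d)) [:0, 1 / (s + t):])"
  proof (rule poly_eqI)
    fix p
    show "coeff (rect_conv d m (pcompose (laguerre d (real m - real d)) [:0, 1 / s:])
                  (pcompose (laguerre d (real m - real d)) [:0, 1 / t:])) p =
          coeff (smult c (pcompose (laguerre d (real m - real d)) [:0, 1 / (s + t):])) p"
    proof (cases "p \<le> d")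
      case False
      then show ?thesis
        unfolding rect_conv_def coeff_sum_monom using assms
        by (simp add: coeff_pcomp_lin coeff_L)
    next
      case True
      define k where "k = d - p"
      have kd: "k \<le> d" and dkp: "d = k + p" using True k_def by auto
      obtain e where me: "m = d + e" using assms(2) le_Suc_ex by blast
      have "coeff (rect_conv d m (pcompose (laguerre d (real m - real d)) [:0, 1 / s:])
                  (pcompose (laguerre d (real m - real d)) [:0, 1 / t:])) p
          = (-1)^k * (fact m / (fact d * fact (d-k) * fact (m-k) * fact k * (s*t)^d) * (s+t)^k)"
        unfolding rect_conv_def coeff_sum_monom k_def[symmetric]
          inner_sum[OF assms(3,4) kd assms(2)] using True by simp
      also have "\<dots> = c * (real (m choose k) * (-1) ^ p / fact p * (1/(s+t))^p)"
      proof -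
        have b: "real (m choose k) = fact m / (fact k * fact (m - k))"
          using binomial_fact[of k m, where 'a=real] assms kd by simp
        show ?thesis unfolding b c_def using assms sq
          by (simp add: dkp me field_simps power_add power_mult_distrib)
      qed
      also have "\<dots> = coeff (smult c (pcompose (laguerre d (real m - real d)) [:0, 1 / (s + t):])) p"
        using True assms by (simp add: coeff_pcomp_lin coeff_L k_def)
      finally show ?thesis .
    qed
  qed
  then show ?thesis using cnz by blast
qed

end
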